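(* Let $(H,\cdot,1,\Delta,\epsilon,S,\rightharpoonup)$ be a Yetter--Drinfeld post-Hopf algebra, and define $x\bullet_\rightharpoonup y:=x_1\cdot(x_2\rightharpoonup y)$ and $S_\rightharpoonup(x):=\beta_\rightharpoonup(x_1)(S(x_2))$ for $x,y\in H$. Then $H_\rightharpoonup:=(H,\bullet_\rightharpoonup,1,\Delta,\epsilon,S_\rightharpoonup)$ is a Hopf algebra (in particular $\bullet_\rightharpoonup$ is associative with unit $1$, $\Delta$ and $\epsilon$ are multiplicative for $\bullet_\rightharpoonup$, and $S_\rightharpoonup$ is an antipode).
   Context: Conventions: $\Bbbk$ is a field; algebras are associative unital, coalgebras coassociative counital; Sweedler notation $\Delta(c)=c_1\otimes c_2$ (summation omitted), iterated as $c_1\otimes c_2\otimes c_3$ etc.; $H\otimes H$ carries the tensor product coalgebra structure. Definition (Yetter--Drinfeld post-Hopf algebra). A tuple $(H,\cdot,1,\Delta,\epsilon,S,\rightharpoonup)$ where $(H,\cdot,1)$ is an algebra, $(H,\Delta,\epsilon)$ is a coalgebra on the same vector space, $S:H\to H$ is linear with $x_1\cdot S(x_2)=S(x_1)\cdot x_2=\epsilon(x)1$ for all $x$, and $\rightharpoonup:H\otimes H\to H$ is a coalgebra morphism, such that for all $x,y,z\in H$: (P1) $x\rightharpoonup(y\cdot z)=(x_1\rightharpoonup y)\cdot(x_2\rightharpoonup z)$; (P2) $x\rightharpoonup(y\rightharpoonup z)=\big(x_1\cdot(x_2\rightharpoonup y)\big)\rightharpoonup z$; (P3) the map $\alpha_\rightharpoonup:H\to\mathrm{End}(H)$,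 $\alpha_\rightharpoonup(x)(y)=x\rightharpoonup y$, is convolution invertible, i.e. there is $\beta_\rightharpoonup:H\to\mathrm{End}(H)$ with $\alpha_\rightharpoonup(x_1)\circ\beta_\rightharpoonup(x_2)=\beta_\rightharpoonup(x_1)\circ\alpha_\rightharpoonup(x_2)=\epsilon(x)\mathrm{Id}_H$; (P4) $\epsilon(a\cdot b)=\epsilon(a)\epsilon(b)$, $\epsilon(1)=1_\Bbbk$, $\Delta(1)=1\otimes 1$; (P5) $\Delta(x\cdot y)=\Big(x_1\cdot\alpha_\rightharpoonup(x_2)\big(\beta_\rightharpoonup(x_4)(y_1)\big)\Big)\otimes(x_3\cdot y_2)$; (P6) setting $x\bullet_\rightharpoonup y:=x_1\cdot(x_2\rightharpoonup y)$, $S_\rightharpoonup(x):=\beta_\rightharpoonup(x_1)(S(x_2))$ and $x\leftharpoonup y:=\big(S_\rightharpoonup(x_1\rightharpoonup y_1)\bullet_\rightharpoonup x_2\big)\bullet_\rightharpoonup y_2$, one has $\Delta(S_\rightharpoonup(x))=S_\rightharpoonup(x_2)\otimes S_\rightharpoonup(x_1)$ and $(x_1\rightharpoonup y_1)\otimes(x_2\leftharpoonup y_2)=(x_2\rightharpoonup y_2)\otimes(x_1\leftharpoonup y_1)$. *)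

theory Defs
  imports Main HOL.Vector_Spaces
begin

text \<open>
Tensor products are not available in the library.  We therefore represent the
comultiplication by a function  comul :: 'h => ('h * 'h) list  giving, for each x,
some representation  Delta(x) = sum of a (x) b  over the pairs (a,b) in the list.
Sweedler sums  f(x_1,x_2)  are written  sw comul x f.  Equalities in H (x) H
(resp. H (x) H (x) H) are stated by testing against all bilinear
(resp. trilinear) forms with values in 'k; over a field two tensors coincide
iff all such forms agree on them, so this is exactly equality of tensors.
\<close>

definition sw :: "('h \<Rightarrow> ('h \<times> 'h) list) \<Rightarrow> 'h \<Rightarrow> ('h \<Rightarrow> 'h \<Rightarrow> 'v::comm_monoid_add) \<Rightarrow> 'v" where
  "sw comul x f = sum_list (map (\<lambda>(a, b). f a b) (comul x))"

text \<open>x_1 (x) x_2 (x) x_3 := (Delta (x) id) Delta x  (well defined by coassociativity)\<close>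
definition sw3 :: "('h \<Rightarrow> ('h \<times> 'h) list) \<Rightarrow> 'h \<Rightarrow> ('h \<Rightarrow> 'h \<Rightarrow> 'h \<Rightarrow> 'v::comm_monoid_add) \<Rightarrow> 'v" where
  "sw3 comul x f = sw comul x (\<lambda>a b. sw comul a (\<lambda>c d. f c d b))"

definition sw4 :: "('h \<Rightarrow> ('h \<times> 'h) list) \<Rightarrow> 'h \<Rightarrow> ('h \<Rightarrow> 'h \<Rightarrow> 'h \<Rightarrow> 'h \<Rightarrow> 'v::comm_monoid_add) \<Rightarrow> 'v" where
  "sw4 comul x f = sw comul x (\<lambda>a b. sw3 comul a (\<lambda>c d e. f c d e b))"

definition bilinear_form :: "('k::field \<Rightarrow> 'h::ab_group_add \<Rightarrow> 'h) \<Rightarrow> ('h \<Rightarrow> 'h \<Rightarrow> 'k) \<Rightarrow> bool" where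
  "bilinear_form sc B \<longleftrightarrow>
     (\<forall>x. Vector_Spaces.linear sc (*) (B x)) \<and> (\<forall>y. Vector_Spaces.linear sc (*) (\<lambda>x. B x y))"

definition trilinear_form :: "('k::field \<Rightarrow> 'h::ab_group_add \<Rightarrow> 'h) \<Rightarrow> ('h \<Rightarrow> 'h \<Rightarrow> 'h \<Rightarrow> 'k) \<Rightarrow> bool" where
  "trilinear_form sc T \<longleftrightarrow>
     (\<forall>y z. Vector_Spaces.linear sc (*) (\<lambda>x. T x y z)) \<and>
     (\<forall>x z. Vector_Spaces.linear sc (*) (\<lambda>y. T x y z)) \<and>
     (\<forall>x y. Vector_Spaces.linear sc (*) (\<lambda>z. T x y z))"

definition bilinear_map :: "('k::field \<Rightarrow> 'h::ab_group_add \<Rightarrow> 'h) \<Rightarrow> ('h \<Rightarrow> 'h \<Rightarrow> 'h) \<Rightarrow> bool" where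
  "bilinear_map sc m \<longleftrightarrow>
     (\<forall>x. Vector_Spaces.linear sc sc (m x)) \<and> (\<forall>y. Vector_Spaces.linear sc sc (\<lambda>x. m x y))"

definition is_algebra :: "('k::field \<Rightarrow> 'h::ab_group_add \<Rightarrow> 'h) \<Rightarrow> ('h \<Rightarrow> 'h \<Rightarrow> 'h) \<Rightarrow> 'h \<Rightarrow> bool" where
  "is_algebra sc mult one \<longleftrightarrow>
     Vector_Spaces.vector_space sc \<and> bilinear_map sc mult \<and>
     (\<forall>x y z. mult (mult x y) z = mult x (mult y z)) \<and>
     (\<forall>x. mult one x = x \<and> mult x one = x)"

definition is_coalgebra :: "('k::field \<Rightarrow> 'h::ab_group_add \<Rightarrow> 'h) \<Rightarrow> ('h \<Rightarrow> ('h \<times> 'h) list) \<Rightarrow> ('h \<Rightarrow> 'k) \<Rightarrow> bool" where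
  "is_coalgebra sc comul counit \<longleftrightarrow>
     Vector_Spaces.vector_space sc \<and>
     (\<forall>B. bilinear_form sc B \<longrightarrow> Vector_Spaces.linear sc (*) (\<lambda>x. sw comul x B)) \<and>
     Vector_Spaces.linear sc (*) counit \<and>
     (\<forall>T x. trilinear_form sc T \<longrightarrow>
        sw comul x (\<lambda>a b. sw comul a (\<lambda>c d. T c d b)) =
        sw comul x (\<lambda>a b. sw comul b (\<lambda>c d. T a c d))) \<and>
     (\<forall>x. sw comul x (\<lambda>a b. sc (counit a) b) = x \<and> sw comul x (\<lambda>a b. sc (counit b) a) = x)"

definition is_hopf_algebra ::
  "('k::field \<Rightarrow> 'h::ab_group_add \<Rightarrow> 'h) \<Rightarrow> ('h \<Rightarrow> 'h \<Rightarrow> 'h) \<Rightarrow> 'h \<Rightarrow>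
   ('h \<Rightarrow> ('h \<times> 'h) list) \<Rightarrow> ('h \<Rightarrow> 'k) \<Rightarrow> ('h \<Rightarrow> 'h) \<Rightarrow> bool" where
  "is_hopf_algebra sc mult one comul counit anti \<longleftrightarrow>
     is_algebra sc mult one \<and> is_coalgebra sc comul counit \<and>
     (\<forall>B x y. bilinear_form sc B \<longrightarrow>
        sw comul (mult x y) B = sw comul x (\<lambda>x1 x2. sw comul y (\<lambda>y1 y2. B (mult x1 y1) (mult x2 y2)))) \<and>
     (\<forall>B. bilinear_form sc B \<longrightarrow> sw comul one B = B one one) \<and>
     (\<forall>x y. counit (mult x y) = counit x * counit y) \<and> counit one = 1 \<and>
     Vector_Spaces.linear sc sc anti \<and>
     (\<forall>x. sw comul x (\<lambda>a b. mult a (anti b)) = sc (counit x) one \<and>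
          sw comul x (\<lambda>a b. mult (anti a) b) = sc (counit x) one)"

definition bullet :: "('h \<Rightarrow> ('h \<times> 'h) list) \<Rightarrow> ('h \<Rightarrow> 'h \<Rightarrow> 'h) \<Rightarrow> ('h \<Rightarrow> 'h \<Rightarrow> 'h) \<Rightarrow> 'h \<Rightarrow> 'h \<Rightarrow> 'h::ab_group_add" where
  "bullet comul mult act x y = sw comul x (\<lambda>a b. mult a (act b y))"

definition S_act :: "('h \<Rightarrow> ('h \<times> 'h) list) \<Rightarrow> ('h \<Rightarrow> 'h \<Rightarrow> 'h) \<Rightarrow> ('h \<Rightarrow> 'h) \<Rightarrow> 'h \<Rightarrow> 'h::ab_group_add" where
  "S_act comul beta anti x = sw comul x (\<lambda>a b. beta a (anti b))"

definition left_act ::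
  "('h \<Rightarrow> ('h \<times> 'h) list) \<Rightarrow> ('h \<Rightarrow> 'h \<Rightarrow> 'h) \<Rightarrow> ('h \<Rightarrow> 'h \<Rightarrow> 'h) \<Rightarrow> ('h \<Rightarrow> 'h \<Rightarrow> 'h) \<Rightarrow> ('h \<Rightarrow> 'h) \<Rightarrow>
   'h \<Rightarrow> 'h \<Rightarrow> 'h::ab_group_add" where
  "left_act comul mult act beta anti x y =
     sw comul x (\<lambda>x1 x2. sw comul y (\<lambda>y1 y2.
        bullet comul mult act (bullet comul mult act (S_act comul beta anti (act x1 y1)) x2) y2))"

text \<open>
The convolution inverse beta of alpha
(beta : H -> End(H), linear, with values linear endomorphisms) is passed as an
explicit parameter; since convolution inverses are unique this is equivalent to
requiring its existence and then using it in (P5) and (P6).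
\<close>
definition yd_post_hopf ::
  "('k::field \<Rightarrow> 'h::ab_group_add \<Rightarrow> 'h) \<Rightarrow> ('h \<Rightarrow> 'h \<Rightarrow> 'h) \<Rightarrow> 'h \<Rightarrow>
   ('h \<Rightarrow> ('h \<times> 'h) list) \<Rightarrow> ('h \<Rightarrow> 'k) \<Rightarrow> ('h \<Rightarrow> 'h) \<Rightarrow> ('h \<Rightarrow> 'h \<Rightarrow> 'h) \<Rightarrow> ('h \<Rightarrow> 'h \<Rightarrow> 'h) \<Rightarrow> bool" where
  "yd_post_hopf sc mult one comul counit anti act beta \<longleftrightarrow>
     is_algebra sc mult one \<and> is_coalgebra sc comul counit \<and>
     Vector_Spaces.linear sc sc anti \<and>
     (\<forall>x. sw comul x (\<lambda>a b. mult a (anti b)) = sc (counit x) one \<and>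
          sw comul x (\<lambda>a b. mult (anti a) b) = sc (counit x) one) \<and>
     \<comment> \<open>act is a coalgebra morphism H (x) H -> H\<close>
     bilinear_map sc act \<and>
     (\<forall>B x y. bilinear_form sc B \<longrightarrow>
        sw comul (act x y) B = sw comul x (\<lambda>x1 x2. sw comul y (\<lambda>y1 y2. B (act x1 y1) (act x2 y2)))) \<and>
     (\<forall>x y. counit (act x y) = counit x * counit y) \<and>
     \<comment> \<open>(P1)\<close>
     (\<forall>x y z. act x (mult y z) = sw comul x (\<lambda>a b. mult (act a y) (act b z))) \<and>
     \<comment> \<open>(P2)\<close>
     (\<forall>x y z. act x (act y z) = act (sw comul x (\<lambda>a b. mult a (act b y))) z) \<and>
     \<comment> \<open>(P3): beta is the convolution inverse of alpha\<close>
     bilinear_map sc beta \<and>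
     (\<forall>x y. sw comul x (\<lambda>a b. act a (beta b y)) = sc (counit x) y \<and>
            sw comul x (\<lambda>a b. beta a (act b y)) = sc (counit x) y) \<and>
     \<comment> \<open>(P4)\<close>
     (\<forall>x y. counit (mult x y) = counit x * counit y) \<and> counit one = 1 \<and>
     (\<forall>B. bilinear_form sc B \<longrightarrow> sw comul one B = B one one) \<and>
     \<comment> \<open>(P5)\<close>
     (\<forall>B x y. bilinear_form sc B \<longrightarrow>
        sw comul (mult x y) B =
        sw4 comul x (\<lambda>x1 x2 x3 x4. sw comul y (\<lambda>y1 y2.
           B (mult x1 (act x2 (beta x4 y1))) (mult x3 y2)))) \<and>
     \<comment> \<open>(P6)\<close>
     (\<forall>B x. bilinear_form sc B \<longrightarrow>
        sw comul (S_act comul beta anti x) B =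
        sw comul x (\<lambda>x1 x2. B (S_act comul beta anti x2) (S_act comul beta anti x1))) \<and>
     (\<forall>B x y. bilinear_form sc B \<longrightarrow>
        sw comul x (\<lambda>x1 x2. sw comul y (\<lambda>y1 y2. B (act x1 y1) (left_act comul mult act beta anti x2 y2))) =
        sw comul x (\<lambda>x1 x2. sw comul y (\<lambda>y1 y2. B (act x2 y2) (left_act comul mult act beta anti x1 y1))))"

end

theory Submission
  imports Defs
begin


lemma sw_push:
  assumes "\<And>u v. g (u + v) = g u + g v" "g 0 = 0"
  shows "g (sw comul x F) = sw comul x (\<lambda>a b. g (F a b))"
proof -
  have "g (sum_list (map (\<lambda>(a, b). F a b) xs)) = sum_list (map (\<lambda>(a, b). g (F a b)) xs)" for xs
    by (induction xs) (auto simp: assms)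
  then show ?thesis unfolding sw_def .
qed

lemma sw_add: "sw comul x (\<lambda>a b. F a b + G a b) = sw comul x F + sw comul x G"
proof -
  have "sum_list (map (\<lambda>(a, b). F a b + G a b) xs) = sum_list (map (\<lambda>(a, b). F a b) xs) + sum_list (map (\<lambda>(a, b). G a b) xs)" for xs
    by (induction xs) (auto simp: algebra_simps)
  then show ?thesis unfolding sw_def .
qed

lemma sw_zero: "sw comul x (\<lambda>a b. 0) = 0"
proof -
  have "sum_list (map (\<lambda>(a, b). 0) xs) = (0::'a::comm_monoid_add)" for xs :: "('b*'b) list"
    by (induction xs) auto
  then show ?thesis unfolding sw_def .
qed

lemma sw_swap: "sw comul x (\<lambda>a b. sw comul y (\<lambda>c d. F a b c d)) = sw comul y (\<lambda>c d. sw comul x (\<lambda>a b. F a b c d))"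
proof -
  have "sum_list (map (\<lambda>(a, b). sw comul y (\<lambda>c d. F a b c d)) xs) = sw comul y (\<lambda>c d. sum_list (map (\<lambda>(a, b). F a b c d) xs))" for xs
    by (induction xs) (auto simp: sw_add sw_zero)
  then show ?thesis unfolding sw_def[of comul x] by simp
qed

lemma sw_cong: "(\<And>a b. F a b = G a b) \<Longrightarrow> sw comul x F = sw comul x G"
  by (simp add: sw_def)

lemma lin_add: "Vector_Spaces.linear s1 s2 f \<Longrightarrow> f (x + y) = f x + f y"
  by (simp add: linear_iff)
lemma lin_scale: "Vector_Spaces.linear s1 s2 f \<Longrightarrow> f (s1 c x) = s2 c (f x)"
  by (simp add: linear_iff)
lemma lin_zero: "Vector_Spaces.linear s1 s2 f \<Longrightarrow> f 0 = 0"
  using lin_add[of s1 s2 f 0 0] by simp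
lemma lin_push: "Vector_Spaces.linear s1 s2 f \<Longrightarrow> f (sw comul x F) = sw comul x (\<lambda>a b. f (F a b))"
  by (rule sw_push) (auto simp: lin_add lin_zero)
lemma lin_diff: "Vector_Spaces.linear s1 s2 f \<Longrightarrow> f (x - y) = f x - f y"
  using lin_add[of s1 s2 f "x - y" y] by (simp add: algebra_simps)

lemma vs_field: "Vector_Spaces.vector_space ((*) :: 'k::field \<Rightarrow> 'k \<Rightarrow> 'k)"
  unfolding vector_space_def by (simp add: algebra_simps)

lemma separation:
  fixes sc :: "'k::field \<Rightarrow> 'h::ab_group_add \<Rightarrow> 'h"
  assumes vs: "Vector_Spaces.vector_space sc"
    and h: "\<And>\<phi>. Vector_Spaces.linear sc (*) \<phi> \<Longrightarrow> \<phi> u = \<phi> v"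
  shows "u = v"
proof (rule ccontr)
  assume ne: "u \<noteq> v"
  interpret V: vector_space sc by (rule vs)
  interpret P: vector_space_pair sc "(*) :: 'k \<Rightarrow> 'k \<Rightarrow> 'k"
    unfolding vector_space_pair_def using vs vs_field by blast
  let ?w = "u - v"
  have ind: "V.independent {?w}" using ne by simp
  let ?f = "P.construct {?w} (\<lambda>_. 1)"
  have lf: "Vector_Spaces.linear sc (*) ?f" by (rule P.linear_construct[OF ind])
  define f where "f = ?f"
  have lf': "Vector_Spaces.linear sc (*) f" using lf f_def by simp
  have f1: "f ?w = 1" unfolding f_def using P.construct_basis[OF ind, of "u-v" "\<lambda>_. 1"] by blast
  have f0: "f ?w = 0" using h[OF lf'] lin_diff[OF lf', of u v] by simp
  from f0 f1 show False by simp
qed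




locale ydp =
  fixes sc :: "'k::field \<Rightarrow> 'h::ab_group_add \<Rightarrow> 'h"
    and mult act beta :: "'h \<Rightarrow> 'h \<Rightarrow> 'h"
    and one :: 'h
    and comul :: "'h \<Rightarrow> ('h \<times> 'h) list"
    and counit :: "'h \<Rightarrow> 'k"
    and anti :: "'h \<Rightarrow> 'h"
  assumes yd: "yd_post_hopf sc mult one comul counit anti act beta"
begin

abbreviation "lin f \<equiv> Vector_Spaces.linear sc sc f"
abbreviation "linK f \<equiv> Vector_Spaces.linear sc ((*)::'k\<Rightarrow>'k\<Rightarrow>'k) f"

lemma alg: "is_algebra sc mult one" using yd unfolding yd_post_hopf_def by blast
lemma coalg: "is_coalgebra sc comul counit" using yd unfolding yd_post_hopf_def by blast
lemma vs: "vector_space sc" using alg unfolding is_algebra_def by blast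
sublocale V: vector_space sc by (rule vs)
lemmas Y1 = yd[unfolded yd_post_hopf_def, THEN conjunct1]
lemmas Y2 = yd[unfolded yd_post_hopf_def, THEN conjunct2, THEN conjunct1]
lemmas Y3 = yd[unfolded yd_post_hopf_def, THEN conjunct2, THEN conjunct2, THEN conjunct1]
lemmas Y4 = yd[unfolded yd_post_hopf_def, THEN conjunct2, THEN conjunct2, THEN conjunct2, THEN conjunct1]
lemmas Y5 = yd[unfolded yd_post_hopf_def, THEN conjunct2, THEN conjunct2, THEN conjunct2, THEN conjunct2, THEN conjunct1]
lemmas Y6 = yd[unfolded yd_post_hopf_def, THEN conjunct2, THEN conjunct2, THEN conjunct2, THEN conjunct2, THEN conjunct2, THEN conjunct1]
lemmas Y7 = yd[unfolded yd_post_hopf_def, THEN conjunct2, THEN conjunct2, THEN conjunct2, THEN conjunct2, THEN conjunct2, THEN conjunct2, THEN conjunct1]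
lemmas Y8 = yd[unfolded yd_post_hopf_def, THEN conjunct2, THEN conjunct2, THEN conjunct2, THEN conjunct2, THEN conjunct2, THEN conjunct2, THEN conjunct2, THEN conjunct1]
lemmas Y9 = yd[unfolded yd_post_hopf_def, THEN conjunct2, THEN conjunct2, THEN conjunct2, THEN conjunct2, THEN conjunct2, THEN conjunct2, THEN conjunct2, THEN conjunct2, THEN conjunct1]
lemmas Y10 = yd[unfolded yd_post_hopf_def, THEN conjunct2, THEN conjunct2, THEN conjunct2, THEN conjunct2, THEN conjunct2, THEN conjunct2, THEN conjunct2, THEN conjunct2, THEN conjunct2, THEN conjunct1]
lemmas Y11 = yd[unfolded yd_post_hopf_def, THEN conjunct2, THEN conjunct2, THEN conjunct2, THEN conjunct2, THEN conjunct2, THEN conjunct2, THEN conjunct2, THEN conjunct2, THEN conjunct2, THEN conjunct2, THEN conjunct1]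
lemmas Y12 = yd[unfolded yd_post_hopf_def, THEN conjunct2, THEN conjunct2, THEN conjunct2, THEN conjunct2, THEN conjunct2, THEN conjunct2, THEN conjunct2, THEN conjunct2, THEN conjunct2, THEN conjunct2, THEN conjunct2, THEN conjunct1]
lemmas Y13 = yd[unfolded yd_post_hopf_def, THEN conjunct2, THEN conjunct2, THEN conjunct2, THEN conjunct2, THEN conjunct2, THEN conjunct2, THEN conjunct2, THEN conjunct2, THEN conjunct2, THEN conjunct2, THEN conjunct2, THEN conjunct2, THEN conjunct1]
lemmas Y14 = yd[unfolded yd_post_hopf_def, THEN conjunct2, THEN conjunct2, THEN conjunct2, THEN conjunct2, THEN conjunct2, THEN conjunct2, THEN conjunct2, THEN conjunct2, THEN conjunct2, THEN conjunct2, THEN conjunct2, THEN conjunct2, THEN conjunct2, THEN conjunct1]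
lemmas Y15 = yd[unfolded yd_post_hopf_def, THEN conjunct2, THEN conjunct2, THEN conjunct2, THEN conjunct2, THEN conjunct2, THEN conjunct2, THEN conjunct2, THEN conjunct2, THEN conjunct2, THEN conjunct2, THEN conjunct2, THEN conjunct2, THEN conjunct2, THEN conjunct2, THEN conjunct1]
lemmas Y16 = yd[unfolded yd_post_hopf_def, THEN conjunct2, THEN conjunct2, THEN conjunct2, THEN conjunct2, THEN conjunct2, THEN conjunct2, THEN conjunct2, THEN conjunct2, THEN conjunct2, THEN conjunct2, THEN conjunct2, THEN conjunct2, THEN conjunct2, THEN conjunct2, THEN conjunct2, THEN conjunct1]
lemmas Y17 = yd[unfolded yd_post_hopf_def, THEN conjunct2, THEN conjunct2, THEN conjunct2, THEN conjunct2, THEN conjunct2, THEN conjunct2, THEN conjunct2, THEN conjunct2, THEN conjunct2, THEN conjunct2, THEN conjunct2, THEN conjunct2, THEN conjunct2, THEN conjunct2, THEN conjunct2, THEN conjunct2]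

lemma assoc: "mult (mult x y) z = mult x (mult y z)" using alg unfolding is_algebra_def by blast
lemma unitL[simp]: "mult one x = x" using alg unfolding is_algebra_def by blast
lemma unitR[simp]: "mult x one = x" using alg unfolding is_algebra_def by blast
lemma lin_mult1: "lin (\<lambda>x. mult x y)" using alg unfolding is_algebra_def bilinear_map_def by blast
lemma lin_mult2: "lin (mult x)" using alg unfolding is_algebra_def bilinear_map_def by blast
lemma linK_swB: "bilinear_form sc B \<Longrightarrow> linK (\<lambda>x. sw comul x B)" using coalg unfolding is_coalgebra_def by blast
lemma linK_counit: "linK counit" using coalg unfolding is_coalgebra_def by blast
lemma coassK: "trilinear_form sc T \<Longrightarrow> sw comul x (\<lambda>a b. sw comul a (\<lambda>c d. T c d b)) =
        sw comul x (\<lambda>a b. sw comul b (\<lambda>c d. T a c d))" using coalg unfolding is_coalgebra_def by blast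
lemma cu1: "sw comul x (\<lambda>a b. sc (counit a) b) = x" using coalg unfolding is_coalgebra_def by blast
lemma cu2: "sw comul x (\<lambda>a b. sc (counit b) a) = x" using coalg unfolding is_coalgebra_def by blast
lemma lin_anti: "lin anti" using Y3 by blast
lemma antipode1: "sw comul x (\<lambda>a b. mult a (anti b)) = sc (counit x) one" using Y4 by blast
lemma antipode2: "sw comul x (\<lambda>a b. mult (anti a) b) = sc (counit x) one" using Y4 by blast
lemma lin_act1: "lin (\<lambda>x. act x y)" using Y5 unfolding bilinear_map_def by blast
lemma lin_act2: "lin (act x)" using Y5 unfolding bilinear_map_def by blast
lemma act_coalg: "bilinear_form sc B \<Longrightarrow> sw comul (act x y) B = sw comul x (\<lambda>x1 x2. sw comul y (\<lambda>y1 y2. B (act x1 y1) (act x2 y2)))"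
  using Y6 by blast
lemma counit_act: "counit (act x y) = counit x * counit y" using Y7 by blast
lemma P1: "act x (mult y z) = sw comul x (\<lambda>a b. mult (act a y) (act b z))" using Y8 by blast
lemma P2: "act x (act y z) = act (sw comul x (\<lambda>a b. mult a (act b y))) z" using Y9 by blast
lemma lin_beta1: "lin (\<lambda>x. beta x y)" using Y10 unfolding bilinear_map_def by blast
lemma lin_beta2: "lin (beta x)" using Y10 unfolding bilinear_map_def by blast
lemma P3a: "sw comul x (\<lambda>a b. act a (beta b y)) = sc (counit x) y" using Y11 by blast
lemma P3b: "sw comul x (\<lambda>a b. beta a (act b y)) = sc (counit x) y" using Y11 by blast
lemma counit_mult: "counit (mult x y) = counit x * counit y" using Y12 by blast
lemma counit_one: "counit one = 1" using Y13 by blast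
lemma sw_oneK: "bilinear_form sc B \<Longrightarrow> sw comul one B = B one one" using Y14 by blast
lemma P5: "bilinear_form sc B \<Longrightarrow> sw comul (mult x y) B =
        sw4 comul x (\<lambda>x1 x2 x3 x4. sw comul y (\<lambda>y1 y2.
           B (mult x1 (act x2 (beta x4 y1))) (mult x3 y2)))" using Y15 by blast
lemma P6K: "bilinear_form sc B \<Longrightarrow>
        sw comul (S_act comul beta anti x) B =
        sw comul x (\<lambda>x1 x2. B (S_act comul beta anti x2) (S_act comul beta anti x1))" using Y16 by blast

end


context ydp begin

lemma linI: "(\<And>x y. f (x + y) = f x + f y) \<Longrightarrow> (\<And>c x. f (sc c x) = sc c (f x)) \<Longrightarrow> lin f"
  by (simp add: linear_iff vs)
lemma linKI: "(\<And>x y. f (x + y) = f x + f y) \<Longrightarrow> (\<And>c x. f (sc c x) = c * f x) \<Longrightarrow> linK f"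
  by (simp add: linear_iff vs vs_field)

lemma L_comp: "lin g \<Longrightarrow> lin f \<Longrightarrow> lin (\<lambda>x. g (f x))"
  by (rule linI) (simp_all add: lin_add lin_scale)
lemma K_comp: "linK g \<Longrightarrow> lin f \<Longrightarrow> linK (\<lambda>x. g (f x))"
  by (rule linKI) (simp_all add: lin_add lin_scale)
lemma L_id: "lin (\<lambda>x. x)" by (rule linI) auto
lemma lin_sc: "lin (sc c)"
  by (rule linI) (simp_all add: V.scale_right_distrib V.scale_scale mult.commute)

lemma L_mult1: "lin f \<Longrightarrow> lin (\<lambda>x. mult (f x) c)" by (rule L_comp[OF lin_mult1])
lemma L_mult2: "lin f \<Longrightarrow> lin (\<lambda>x. mult c (f x))" by (rule L_comp[OF lin_mult2])
lemma L_act1: "lin f \<Longrightarrow> lin (\<lambda>x. act (f x) c)" by (rule L_comp[OF lin_act1])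
lemma L_act2: "lin f \<Longrightarrow> lin (\<lambda>x. act c (f x))" by (rule L_comp[OF lin_act2])
lemma L_beta1: "lin f \<Longrightarrow> lin (\<lambda>x. beta (f x) c)" by (rule L_comp[OF lin_beta1])
lemma L_beta2: "lin f \<Longrightarrow> lin (\<lambda>x. beta c (f x))" by (rule L_comp[OF lin_beta2])
lemma L_anti: "lin f \<Longrightarrow> lin (\<lambda>x. anti (f x))" by (rule L_comp[OF lin_anti])
lemma L_sc2: "lin f \<Longrightarrow> lin (\<lambda>x. sc c (f x))" by (rule L_comp[OF lin_sc])
lemma L_sc1: "linK g \<Longrightarrow> lin (\<lambda>x. sc (g x) c)"
  by (rule linI) (simp_all add: lin_add lin_scale V.scale_left_distrib V.scale_scale)
lemma K_mul1: "linK g \<Longrightarrow> linK (\<lambda>x. g x * c)"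
  by (rule linKI) (simp_all add: lin_add lin_scale algebra_simps)
lemma K_mul2: "linK g \<Longrightarrow> linK (\<lambda>x. c * g x)"
  by (rule linKI) (simp_all add: lin_add lin_scale algebra_simps)
lemma K_counit: "lin f \<Longrightarrow> linK (\<lambda>x. counit (f x))" by (rule K_comp[OF linK_counit])
lemma K_B1: "bilinear_form sc B \<Longrightarrow> lin f \<Longrightarrow> linK (\<lambda>x. B (f x) c)"
  unfolding bilinear_form_def by (rule K_comp) auto
lemma K_B2: "bilinear_form sc B \<Longrightarrow> lin f \<Longrightarrow> linK (\<lambda>x. B c (f x))"
  unfolding bilinear_form_def by (rule K_comp) auto

lemma L_sw_in: "(\<And>p q. lin (\<lambda>x. F x p q)) \<Longrightarrow> lin (\<lambda>x. sw comul a (\<lambda>p q. F x p q))"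
proof (rule linI)
  fix x y c assume h: "\<And>p q. lin (\<lambda>x. F x p q)"
  show "sw comul a (\<lambda>p q. F (x + y) p q) = sw comul a (\<lambda>p q. F x p q) + sw comul a (\<lambda>p q. F y p q)"
    using lin_add[OF h] by (simp add: sw_add)
  show "sw comul a (\<lambda>p q. F (sc c x) p q) = sc c (sw comul a (\<lambda>p q. F x p q))"
    using lin_scale[OF h] by (simp add: lin_push[OF lin_sc])
qed
lemma K_sw_in: "(\<And>p q. linK (\<lambda>x. F x p q)) \<Longrightarrow> linK (\<lambda>x. sw comul a (\<lambda>p q. F x p q))"
proof (rule linKI)
  fix x y c assume h: "\<And>p q. linK (\<lambda>x. F x p q)"
  show "sw comul a (\<lambda>p q. F (x + y) p q) = sw comul a (\<lambda>p q. F x p q) + sw comul a (\<lambda>p q. F y p q)"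
    using lin_add[OF h] by (simp add: sw_add)
  show "sw comul a (\<lambda>p q. F (sc c x) p q) = c * (sw comul a (\<lambda>p q. F x p q))"
    using lin_scale[OF h] by (simp add: sw_push[where g="(*) c"] algebra_simps)
qed

lemma bilin_formI: "(\<And>q. linK (\<lambda>p. G p q)) \<Longrightarrow> (\<And>p. linK (\<lambda>q. G p q)) \<Longrightarrow> bilinear_form sc G"
  unfolding bilinear_form_def by auto
lemma trilin_formI: "(\<And>b c. linK (\<lambda>a. T a b c)) \<Longrightarrow> (\<And>a c. linK (\<lambda>b. T a b c)) \<Longrightarrow> (\<And>a b. linK (\<lambda>c. T a b c)) \<Longrightarrow> trilinear_form sc T"
  unfolding trilinear_form_def by auto

lemma K_sw_arg: "lin f \<Longrightarrow> (\<And>q. linK (\<lambda>p. G p q)) \<Longrightarrow> (\<And>p. linK (\<lambda>q. G p q)) \<Longrightarrow> linK (\<lambda>x. sw comul (f x) G)"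
  by (rule K_comp[OF linK_swB[OF bilin_formI]])

lemma sepH: "(\<And>\<phi>. linK \<phi> \<Longrightarrow> \<phi> u = \<phi> v) \<Longrightarrow> u = v"
  by (rule separation[OF vs])

lemma lin_swH: assumes "\<And>q. lin (\<lambda>p. G p q)" "\<And>p. lin (\<lambda>q. G p q)"
  shows "lin (\<lambda>x. sw comul x G)"
proof (rule linI)
  fix x y c
  show "sw comul (x + y) G = sw comul x G + sw comul y G"
  proof (rule sepH)
    fix \<phi> assume p: "linK \<phi>"
    have l: "linK (\<lambda>x. sw comul x (\<lambda>a b. \<phi> (G a b)))"
      by (rule linK_swB, rule bilin_formI; rule K_comp[OF p]) (use assms in auto)
    show "\<phi> (sw comul (x + y) G) = \<phi> (sw comul x G + sw comul y G)"
      by (simp add: lin_add[OF p] lin_push[OF p] lin_add[OF l])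
  qed
  show "sw comul (sc c x) G = sc c (sw comul x G)"
  proof (rule sepH)
    fix \<phi> assume p: "linK \<phi>"
    have l: "linK (\<lambda>x. sw comul x (\<lambda>a b. \<phi> (G a b)))"
      by (rule linK_swB, rule bilin_formI; rule K_comp[OF p]) (use assms in auto)
    show "\<phi> (sw comul (sc c x) G) = \<phi> (sc c (sw comul x G))"
      by (simp add: lin_scale[OF p] lin_push[OF p] lin_scale[OF l])
  qed
qed

lemma L_sw_arg: "lin f \<Longrightarrow> (\<And>q. lin (\<lambda>p. G p q)) \<Longrightarrow> (\<And>p. lin (\<lambda>q. G p q)) \<Longrightarrow> lin (\<lambda>x. sw comul (f x) G)"
  by (rule L_comp[OF lin_swH])

lemma coassocK:
  assumes "\<And>b c. linK (\<lambda>a. T a b c)" "\<And>a c. linK (\<lambda>b. T a b c)" "\<And>a b. linK (\<lambda>c. T a b c)"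
  shows "sw comul x (\<lambda>a b. sw comul a (\<lambda>c d. T c d b)) = sw comul x (\<lambda>a b. sw comul b (\<lambda>c d. T a c d))"
  by (rule coassK, rule trilin_formI) (fact assms)+

lemma coassoc:
  assumes "\<And>b c. lin (\<lambda>a. T a b c)" "\<And>a c. lin (\<lambda>b. T a b c)" "\<And>a b. lin (\<lambda>c. T a b c)"
  shows "sw comul x (\<lambda>a b. sw comul a (\<lambda>c d. T c d b)) = sw comul x (\<lambda>a b. sw comul b (\<lambda>c d. T a c d))"
proof (rule sepH)
  fix \<phi> assume p: "linK \<phi>"
  have "sw comul x (\<lambda>a b. sw comul a (\<lambda>c d. \<phi> (T c d b))) = sw comul x (\<lambda>a b. sw comul b (\<lambda>c d. \<phi> (T a c d)))"
    by (rule coassocK; rule K_comp[OF p]) (fact assms)+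
  then show "\<phi> (sw comul x (\<lambda>a b. sw comul a (\<lambda>c d. T c d b))) = \<phi> (sw comul x (\<lambda>a b. sw comul b (\<lambda>c d. T a c d)))"
    by (simp add: lin_push[OF p])
qed

lemmas LR = L_id L_mult1 L_mult2 L_act1 L_act2 L_beta1 L_beta2 L_anti L_sc2 L_sc1
  K_mul1 K_mul2 K_counit L_sw_in K_sw_in L_sw_arg K_sw_arg

end


context ydp begin

lemma mult_sw1: "mult (sw comul x F) c = sw comul x (\<lambda>a b. mult (F a b) c)" using lin_push[OF lin_mult1] .
lemma mult_sw2: "mult c (sw comul x F) = sw comul x (\<lambda>a b. mult c (F a b))" using lin_push[OF lin_mult2] .
lemma act_sw1: "act (sw comul x F) c = sw comul x (\<lambda>a b. act (F a b) c)" using lin_push[OF lin_act1] .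
lemma act_sw2: "act c (sw comul x F) = sw comul x (\<lambda>a b. act c (F a b))" using lin_push[OF lin_act2] .
lemma beta_sw1: "beta (sw comul x F) c = sw comul x (\<lambda>a b. beta (F a b) c)" using lin_push[OF lin_beta1] .
lemma beta_sw2: "beta c (sw comul x F) = sw comul x (\<lambda>a b. beta c (F a b))" using lin_push[OF lin_beta2] .
lemma anti_sw: "anti (sw comul x F) = sw comul x (\<lambda>a b. anti (F a b))" using lin_push[OF lin_anti] .
lemma sc_sw2: "sc c (sw comul x F) = sw comul x (\<lambda>a b. sc c (F a b))" using lin_push[OF lin_sc] .
lemma counit_sw: "counit (sw comul x F) = sw comul x (\<lambda>a b. counit (F a b))" using lin_push[OF linK_counit] .
lemma B_sw1: "bilinear_form sc B \<Longrightarrow> B (sw comul x F) c = sw comul x (\<lambda>a b. B (F a b) c)"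
  unfolding bilinear_form_def using lin_push[of sc "(*)" "\<lambda>u. B u c"] by auto
lemma B_sw2: "bilinear_form sc B \<Longrightarrow> B c (sw comul x F) = sw comul x (\<lambda>a b. B c (F a b))"
  unfolding bilinear_form_def using lin_push[of sc "(*)" "B c"] by auto
lemma kmul_sw1: "(sw comul x G) * (c::'k) = sw comul x (\<lambda>a b. G a b * c)"
  by (rule sw_push[where g="\<lambda>u. u * c"]) (auto simp: algebra_simps)
lemma kmul_sw2: "(c::'k) * (sw comul x G) = sw comul x (\<lambda>a b. c * G a b)"
  by (rule sw_push[where g="\<lambda>u. c * u"]) (auto simp: algebra_simps)
lemma sc_sw1: "sc (sw comul x G) v = sw comul x (\<lambda>a b. sc (G a b) v)"
  by (rule sw_push[where g="\<lambda>u. sc u v"]) (auto simp: V.scale_left_distrib)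

lemmas PS = mult_sw1 mult_sw2 act_sw1 act_sw2 beta_sw1 beta_sw2 anti_sw sc_sw2 counit_sw kmul_sw1 kmul_sw2 sc_sw1

lemma cuL: "lin f \<Longrightarrow> sw comul x (\<lambda>a b. sc (counit a) (f b)) = f x"
  using lin_push[of sc sc f comul x "\<lambda>a b. sc (counit a) b"] by (simp add: cu1 lin_scale)
lemma cuR: "lin f \<Longrightarrow> sw comul x (\<lambda>a b. sc (counit b) (f a)) = f x"
  using lin_push[of sc sc f comul x "\<lambda>a b. sc (counit b) a"] by (simp add: cu2 lin_scale)
lemma cuKL: "linK g \<Longrightarrow> sw comul x (\<lambda>a b. counit a * g b) = g x"
  using lin_push[of sc "(*)" g comul x "\<lambda>a b. sc (counit a) b"] by (simp add: cu1 lin_scale)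
lemma cuKR: "linK g \<Longrightarrow> sw comul x (\<lambda>a b. g a * counit b) = g x"
  using lin_push[of sc "(*)" g comul x "\<lambda>a b. sc (counit b) a"] by (simp add: cu2 lin_scale mult.commute)

lemma sw_oneH: assumes "\<And>q. lin (\<lambda>p. G p q)" "\<And>p. lin (\<lambda>q. G p q)"
  shows "sw comul one G = G one one"
proof (rule sepH)
  fix \<phi> assume p: "linK \<phi>"
  have "sw comul one (\<lambda>a b. \<phi> (G a b)) = \<phi> (G one one)"
    by (rule sw_oneK, rule bilin_formI; rule K_comp[OF p]) (use assms in auto)
  then show "\<phi> (sw comul one G) = \<phi> (G one one)" by (simp add: lin_push[OF p])
qed

lemma act_x_one: "act x one = sc (counit x) one"
proof -
  have "sc (counit x) w = mult (act x one) w" for w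
  proof -
    have "sc (counit x) w = sw comul x (\<lambda>a b. act a (beta b w))" by (simp add: P3a)
    also have "\<dots> = sw comul x (\<lambda>a b. sw comul a (\<lambda>p q. mult (act p one) (act q (beta b w))))"
      by (rule sw_cong) (rule P1[of _ one, unfolded unitL])
    also have "\<dots> = sw comul x (\<lambda>a b. sw comul b (\<lambda>p q. mult (act a one) (act p (beta q w))))"
      by (rule coassoc; intro LR)
    also have "\<dots> = sw comul x (\<lambda>a b. mult (act a one) (sc (counit b) w))"
      by (simp add: PS[symmetric] P3a)
    also have "\<dots> = sw comul x (\<lambda>a b. sc (counit b) (mult (act a one) w))"
      by (simp add: lin_scale[OF lin_mult2])
    also have "\<dots> = mult (act x one) w"
      by (rule cuR; intro LR)
    finally show ?thesis .
  qed
  from this[of one] show ?thesis by simp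
qed

end


context ydp begin

abbreviation "Sa \<equiv> S_act comul beta anti"
abbreviation "bu \<equiv> bullet comul mult act"

lemma L_Sa: "lin f \<Longrightarrow> lin (\<lambda>x. Sa (f x))"
  unfolding S_act_def by (intro LR)
lemma L_bu1: "lin f \<Longrightarrow> lin (\<lambda>x. bu (f x) c)"
  unfolding bullet_def by (intro LR)
lemma L_bu2: "lin f \<Longrightarrow> lin (\<lambda>x. bu c (f x))"
  unfolding bullet_def by (intro LR)
lemmas LR2 = LR L_Sa L_bu1 L_bu2

lemma act_one: "act one z = z"
proof -
  have h1: "act one (act one u) = act one u" for u
  proof -
    have "act one (act one u) = act (sw comul one (\<lambda>a b. mult a (act b one))) u" by (rule P2)
    also have "sw comul one (\<lambda>a b. mult a (act b one)) = mult one (act one one)"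
      by (rule sw_oneH; intro LR)
    also have "\<dots> = one" by (simp add: act_x_one counit_one)
    finally show ?thesis .
  qed
  have h2: "act one (beta one y) = y" for y
  proof -
    have "sw comul one (\<lambda>a b. act a (beta b y)) = act one (beta one y)"
      by (rule sw_oneH; intro LR)
    then show ?thesis using P3a[of one y] by (simp add: counit_one)
  qed
  have "act one z = act one (act one (beta one z))" using h2 by simp
  also have "\<dots> = z" using h1[of "beta one z"] h2[of z] by simp
  finally show ?thesis .
qed

lemma Sa_inner: "sw comul w (\<lambda>q b. act q (Sa b)) = anti w"
proof -
  have "sw comul w (\<lambda>q b. act q (Sa b)) = sw comul w (\<lambda>q b. sw comul b (\<lambda>c d. act q (beta c (anti d))))"
    unfolding S_act_def by (simp add: act_sw2)
  also have "\<dots> = sw comul w (\<lambda>v d. sw comul v (\<lambda>q c. act q (beta c (anti d))))"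
    by (rule coassoc[symmetric]; intro LR)
  also have "\<dots> = sw comul w (\<lambda>v d. sc (counit v) (anti d))" by (simp add: P3a)
  also have "\<dots> = anti w" by (rule cuL; intro LR)
  finally show ?thesis .
qed

lemma apR: "sw comul x (\<lambda>a b. bu a (Sa b)) = sc (counit x) one"
proof -
  have "sw comul x (\<lambda>a b. bu a (Sa b)) = sw comul x (\<lambda>a b. sw comul a (\<lambda>p q. mult p (act q (Sa b))))"
    unfolding bullet_def ..
  also have "\<dots> = sw comul x (\<lambda>p w. sw comul w (\<lambda>q b. mult p (act q (Sa b))))"
    by (rule coassoc; intro LR2)
  also have "\<dots> = sw comul x (\<lambda>p w. mult p (anti w))"
    by (simp add: mult_sw2[symmetric] Sa_inner)
  also have "\<dots> = sc (counit x) one" by (rule antipode1)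
  finally show ?thesis .
qed

lemma INV: assumes "lin G" "\<And>x. sw comul x (\<lambda>a b. act a (G b)) = sc (counit x) w"
  shows "G x = beta x w"
proof -
  have "beta x w = sw comul x (\<lambda>c u. sc (counit u) (beta c w))" by (rule cuR[symmetric]; intro LR)
  also have "\<dots> = sw comul x (\<lambda>c u. beta c (sc (counit u) w))" by (simp add: lin_scale[OF lin_beta2])
  also have "\<dots> = sw comul x (\<lambda>c u. sw comul u (\<lambda>d b. beta c (act d (G b))))"
    by (simp add: assms(2)[symmetric] beta_sw2)
  also have "\<dots> = sw comul x (\<lambda>v b. sw comul v (\<lambda>c d. beta c (act d (G b))))"
    by (rule coassoc[symmetric]; intro LR assms(1))
  also have "\<dots> = sw comul x (\<lambda>v b. sc (counit v) (G b))" by (simp add: P3b)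
  also have "\<dots> = G x" by (rule cuL[OF assms(1)])
  finally show ?thesis by simp
qed

lemma act_Sa: "act (Sa v) z = beta v z"
proof (rule INV[where G="\<lambda>v. act (Sa v) z"])
  show "lin (\<lambda>v. act (Sa v) z)" by (intro LR2)
  fix x
  have "sw comul x (\<lambda>a b. act a (act (Sa b) z)) = sw comul x (\<lambda>a b. act (bu a (Sa b)) z)"
    unfolding bullet_def by (simp add: P2)
  also have "\<dots> = act (sw comul x (\<lambda>a b. bu a (Sa b))) z" by (simp add: act_sw1)
  also have "\<dots> = sc (counit x) z" by (simp add: apR lin_scale[OF lin_act1] act_one)
  finally show "sw comul x (\<lambda>a b. act a (act (Sa b) z)) = sc (counit x) z" .
qed

lemma beta_one: "beta v one = sc (counit v) one"
proof (rule INV[where G="\<lambda>v. sc (counit v) one", symmetric])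
  show "lin (\<lambda>v. sc (counit v) one)" by (intro LR)
  fix x
  have "sw comul x (\<lambda>a b. act a (sc (counit b) one)) = sw comul x (\<lambda>a b. sc (counit b) (act a one))"
    by (simp add: lin_scale[OF lin_act2])
  also have "\<dots> = act x one" by (rule cuR; intro LR)
  finally show "sw comul x (\<lambda>a b. act a (sc (counit b) one)) = sc (counit x) one" by (simp add: act_x_one)
qed

lemma beta_mult: "beta v (mult y z) = sw comul v (\<lambda>v1 v2. mult (beta v2 y) (beta v1 z))"
proof (rule INV[where G="\<lambda>v. sw comul v (\<lambda>v1 v2. mult (beta v2 y) (beta v1 z))", symmetric])
  show "lin (\<lambda>v. sw comul v (\<lambda>v1 v2. mult (beta v2 y) (beta v1 z)))" by (intro LR)
  fix x
  have "sw comul x (\<lambda>a b. act a (sw comul b (\<lambda>b1 b2. mult (beta b2 y) (beta b1 z))))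
     = sw comul x (\<lambda>a b. sw comul b (\<lambda>b1 b2. sw comul a (\<lambda>a1 a2. mult (act a1 (beta b2 y)) (act a2 (beta b1 z)))))"
    by (simp add: act_sw2 P1)
  also have "\<dots> = sw comul x (\<lambda>a b. sw comul a (\<lambda>a1 a2. sw comul b (\<lambda>b1 b2. mult (act a1 (beta b2 y)) (act a2 (beta b1 z)))))"
    by (rule sw_cong) (rule sw_swap)
  also have "\<dots> = sw comul x (\<lambda>a1 r. sw comul r (\<lambda>a2 b. sw comul b (\<lambda>b1 b2. mult (act a1 (beta b2 y)) (act a2 (beta b1 z)))))"
    by (rule coassoc; intro LR)
  also have "\<dots> = sw comul x (\<lambda>a1 r. sw comul r (\<lambda>s b2. sw comul s (\<lambda>a2 b1. mult (act a1 (beta b2 y)) (act a2 (beta b1 z)))))"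
    by (rule sw_cong, rule coassoc[symmetric]; intro LR)
  also have "\<dots> = sw comul x (\<lambda>a1 r. sw comul r (\<lambda>s b2. sc (counit s) (mult (act a1 (beta b2 y)) z)))"
    by (simp add: mult_sw2[symmetric] P3a lin_scale[OF lin_mult2])
  also have "\<dots> = sw comul x (\<lambda>a1 r. mult (act a1 (beta r y)) z)"
    by (rule sw_cong, rule cuL; intro LR)
  also have "\<dots> = sc (counit x) (mult y z)"
    by (simp add: mult_sw1[symmetric] P3a lin_scale[OF lin_mult1])
  finally show "sw comul x (\<lambda>a b. act a (sw comul b (\<lambda>b1 b2. mult (beta b2 y) (beta b1 z)))) = sc (counit x) (mult y z)" .
qed

end


context ydp begin

lemma P6H: assumes "\<And>q. lin (\<lambda>p. G p q)" "\<And>p. lin (\<lambda>q. G p q)"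
  shows "sw comul (Sa x) G = sw comul x (\<lambda>x1 x2. G (Sa x2) (Sa x1))"
proof (rule sepH)
  fix \<phi> assume p: "linK \<phi>"
  have "sw comul (Sa x) (\<lambda>a b. \<phi> (G a b)) = sw comul x (\<lambda>x1 x2. \<phi> (G (Sa x2) (Sa x1)))"
    by (rule P6K, rule bilin_formI; rule K_comp[OF p]) (use assms in auto)
  then show "\<phi> (sw comul (Sa x) G) = \<phi> (sw comul x (\<lambda>x1 x2. G (Sa x2) (Sa x1)))" by (simp add: lin_push[OF p])
qed

lemma apL_inner: "bu (Sa a) b = sw comul a (\<lambda>v d. beta v (mult (anti d) b))"
proof -
  have "bu (Sa a) b = sw comul (Sa a) (\<lambda>p q. mult p (act q b))" unfolding bullet_def ..
  also have "\<dots> = sw comul a (\<lambda>a1 a2. mult (Sa a2) (act (Sa a1) b))" by (rule P6H; intro LR)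
  also have "\<dots> = sw comul a (\<lambda>a1 a2. sw comul a2 (\<lambda>c d. mult (beta c (anti d)) (beta a1 b)))"
    unfolding act_Sa by (simp add: S_act_def mult_sw1)
  also have "\<dots> = sw comul a (\<lambda>v d. sw comul v (\<lambda>a1 c. mult (beta c (anti d)) (beta a1 b)))"
    by (rule coassoc[symmetric]; intro LR)
  also have "\<dots> = sw comul a (\<lambda>v d. beta v (mult (anti d) b))" by (simp add: beta_mult)
  finally show ?thesis .
qed

lemma apL: "sw comul x (\<lambda>a b. bu (Sa a) b) = sc (counit x) one"
proof -
  have "sw comul x (\<lambda>a b. bu (Sa a) b) = sw comul x (\<lambda>a b. sw comul a (\<lambda>v d. beta v (mult (anti d) b)))"
    by (simp add: apL_inner)
  also have "\<dots> = sw comul x (\<lambda>v u. sw comul u (\<lambda>d b. beta v (mult (anti d) b)))"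
    by (rule coassoc; intro LR)
  also have "\<dots> = sw comul x (\<lambda>v u. sc (counit u) (beta v one))"
    by (simp add: beta_sw2[symmetric] antipode2 lin_scale[OF lin_beta2])
  also have "\<dots> = beta x one" by (rule cuR; intro LR)
  finally show ?thesis by (simp add: beta_one)
qed

lemma bf_flip: "bilinear_form sc B \<Longrightarrow> bilinear_form sc (\<lambda>a b. B b a)"
  unfolding bilinear_form_def by auto

lemma B_scale1: "bilinear_form sc B \<Longrightarrow> B (sc c u) v = c * B u v"
  unfolding bilinear_form_def using lin_scale[of sc "(*)" "\<lambda>u. B u v"] by auto

lemma dm_aux: assumes B: "bilinear_form sc B"
  shows "sw comul v (\<lambda>a4 b1. sw comul y (\<lambda>y1 y2. B (mult a1 (act a2 (beta a4 (act b1 y1)))) (mult a3 (act b2 y2))))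
       = counit v * sw comul y (\<lambda>y1 y2. B (mult a1 (act a2 y1)) (mult a3 (act b2 y2)))"
proof -
  have "sw comul v (\<lambda>a4 b1. sw comul y (\<lambda>y1 y2. B (mult a1 (act a2 (beta a4 (act b1 y1)))) (mult a3 (act b2 y2))))
     = sw comul y (\<lambda>y1 y2. sw comul v (\<lambda>a4 b1. B (mult a1 (act a2 (beta a4 (act b1 y1)))) (mult a3 (act b2 y2))))"
    by (rule sw_swap)
  also have "\<dots> = sw comul y (\<lambda>y1 y2. B (mult a1 (act a2 (sw comul v (\<lambda>a4 b1. beta a4 (act b1 y1))))) (mult a3 (act b2 y2)))"
    by (simp add: B_sw1[OF B] act_sw2 mult_sw2)
  also have "\<dots> = sw comul y (\<lambda>y1 y2. counit v * B (mult a1 (act a2 y1)) (mult a3 (act b2 y2)))"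
    by (simp add: P3b lin_scale[OF lin_act2] lin_scale[OF lin_mult2] B_scale1[OF B])
  also have "\<dots> = counit v * sw comul y (\<lambda>y1 y2. B (mult a1 (act a2 y1)) (mult a3 (act b2 y2)))"
    by (simp add: kmul_sw2)
  finally show ?thesis .
qed

lemma dmK: assumes B: "bilinear_form sc B"
  shows "sw comul (bu x y) B = sw comul x (\<lambda>x1 x2. sw comul y (\<lambda>y1 y2. B (bu x1 y1) (bu x2 y2)))"
proof -
  have "sw comul (bu x y) B = sw comul x (\<lambda>a b. sw comul (mult a (act b y)) B)"
    unfolding bullet_def by (rule lin_push[OF linK_swB[OF B]])
  also have "\<dots> = sw comul x (\<lambda>a b. sw4 comul a (\<lambda>a1 a2 a3 a4. sw comul (act b y) (\<lambda>c1 c2. B (mult a1 (act a2 (beta a4 c1))) (mult a3 c2))))"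
    by (simp add: P5[OF B])
  also have "\<dots> = sw comul x (\<lambda>a b. sw comul a (\<lambda>p a4. sw comul p (\<lambda>r a3. sw comul r (\<lambda>a1 a2.
       sw comul b (\<lambda>b1 b2. sw comul y (\<lambda>y1 y2. B (mult a1 (act a2 (beta a4 (act b1 y1)))) (mult a3 (act b2 y2))))))))"
    unfolding sw4_def sw3_def
    apply (rule sw_cong)+
    apply (rule act_coalg)
    apply (rule bilin_formI)
     apply (rule K_B1[OF B]; intro LR)
    apply (rule K_B2[OF B]; intro LR)
    done
  also have "\<dots> = sw comul x (\<lambda>p w. sw comul w (\<lambda>a4 b. sw comul p (\<lambda>r a3. sw comul r (\<lambda>a1 a2.
       sw comul b (\<lambda>b1 b2. sw comul y (\<lambda>y1 y2. B (mult a1 (act a2 (beta a4 (act b1 y1)))) (mult a3 (act b2 y2))))))))"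
    by (rule coassocK; intro LR K_B1[OF B] K_B2[OF B])
  also have "\<dots> = sw comul x (\<lambda>p w. sw comul p (\<lambda>r a3. sw comul r (\<lambda>a1 a2. sw comul w (\<lambda>a4 b.
       sw comul b (\<lambda>b1 b2. sw comul y (\<lambda>y1 y2. B (mult a1 (act a2 (beta a4 (act b1 y1)))) (mult a3 (act b2 y2))))))))"
    by (rule sw_cong, rule trans[OF sw_swap], rule sw_cong, rule sw_swap)
  also have "\<dots> = sw comul x (\<lambda>p w. sw comul p (\<lambda>r a3. sw comul r (\<lambda>a1 a2. sw comul w (\<lambda>v b2.
       sw comul v (\<lambda>a4 b1. sw comul y (\<lambda>y1 y2. B (mult a1 (act a2 (beta a4 (act b1 y1)))) (mult a3 (act b2 y2))))))))"
    by (rule sw_cong, rule sw_cong, rule sw_cong, rule coassocK[symmetric]; intro LR K_B1[OF B] K_B2[OF B])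
  also have "\<dots> = sw comul x (\<lambda>p w. sw comul p (\<lambda>r a3. sw comul r (\<lambda>a1 a2. sw comul w (\<lambda>v b2.
       counit v * sw comul y (\<lambda>y1 y2. B (mult a1 (act a2 y1)) (mult a3 (act b2 y2)))))))"
    by (simp add: dm_aux[OF B])
  also have "\<dots> = sw comul x (\<lambda>p w. sw comul p (\<lambda>r a3. sw comul r (\<lambda>a1 a2.
       sw comul y (\<lambda>y1 y2. B (mult a1 (act a2 y1)) (mult a3 (act w y2))))))"
    by (rule sw_cong, rule sw_cong, rule sw_cong, rule cuKL; intro LR K_B1[OF B] K_B2[OF B])
  also have "\<dots> = sw comul x (\<lambda>r u. sw comul u (\<lambda>a3 a4. sw comul r (\<lambda>a1 a2.
       sw comul y (\<lambda>y1 y2. B (mult a1 (act a2 y1)) (mult a3 (act a4 y2))))))"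
    by (rule coassocK; intro LR K_B1[OF B] K_B2[OF B])
  also have "\<dots> = sw comul x (\<lambda>r u. sw comul y (\<lambda>y1 y2. sw comul r (\<lambda>a1 a2.
       sw comul u (\<lambda>a3 a4. B (mult a1 (act a2 y1)) (mult a3 (act a4 y2))))))"
    apply (rule sw_cong)
    apply (rule trans[OF sw_swap])
    apply (rule trans[OF sw_cong[OF sw_swap]])
    apply (rule sw_swap)
    done
  also have "\<dots> = sw comul x (\<lambda>x1 x2. sw comul y (\<lambda>y1 y2. B (bu x1 y1) (bu x2 y2)))"
    unfolding bullet_def by (simp only: B_sw1[OF B], simp only: B_sw2[OF B])
  finally show ?thesis .
qed

lemma dmH: assumes "\<And>q. lin (\<lambda>p. G p q)" "\<And>p. lin (\<lambda>q. G p q)"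
  shows "sw comul (bu x y) G = sw comul x (\<lambda>x1 x2. sw comul y (\<lambda>y1 y2. G (bu x1 y1) (bu x2 y2)))"
proof (rule sepH)
  fix \<phi> assume p: "linK \<phi>"
  have "sw comul (bu x y) (\<lambda>a b. \<phi> (G a b)) = sw comul x (\<lambda>x1 x2. sw comul y (\<lambda>y1 y2. \<phi> (G (bu x1 y1) (bu x2 y2))))"
    by (rule dmK, rule bilin_formI; rule K_comp[OF p]) (use assms in auto)
  then show "\<phi> (sw comul (bu x y) G) = \<phi> (sw comul x (\<lambda>x1 x2. sw comul y (\<lambda>y1 y2. G (bu x1 y1) (bu x2 y2))))"
    by (simp add: lin_push[OF p])
qed

lemma act_bu: "act (bu a b) z = act a (act b z)" by (simp add: bullet_def P2)

lemma bu_assoc: "bu (bu x y) z = bu x (bu y z)"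
proof -
  have "bu (bu x y) z = sw comul (bu x y) (\<lambda>p q. mult p (act q z))" by (simp add: bullet_def)
  also have "\<dots> = sw comul x (\<lambda>x1 x2. sw comul y (\<lambda>y1 y2. mult (bu x1 y1) (act (bu x2 y2) z)))"
    by (rule dmH; intro LR)
  also have "\<dots> = sw comul x (\<lambda>x1 x2. sw comul y (\<lambda>y1 y2. sw comul x1 (\<lambda>a b. mult (mult a (act b y1)) (act x2 (act y2 z)))))"
    unfolding act_bu by (simp add: bullet_def mult_sw1)
  also have "\<dots> = sw comul x (\<lambda>x1 x2. sw comul x1 (\<lambda>a b. sw comul y (\<lambda>y1 y2. mult (mult a (act b y1)) (act x2 (act y2 z)))))"
    by (rule sw_cong, rule sw_swap)
  also have "\<dots> = sw comul x (\<lambda>a w. sw comul w (\<lambda>b c. sw comul y (\<lambda>y1 y2. mult (mult a (act b y1)) (act c (act y2 z)))))"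
    by (rule coassoc; intro LR)
  also have "\<dots> = sw comul x (\<lambda>a w. sw comul y (\<lambda>y1 y2. sw comul w (\<lambda>b c. mult a (mult (act b y1) (act c (act y2 z))))))"
    by (rule sw_cong, rule trans[OF sw_swap]) (simp add: assoc)
  also have "\<dots> = bu x (bu y z)"
    by (simp add: bullet_def act_sw2 mult_sw2 P1)
  finally show ?thesis .
qed

lemma bu_one1: "bu one x = x"
proof -
  have "bu one x = mult one (act one x)" unfolding bullet_def by (rule sw_oneH; intro LR)
  then show ?thesis by (simp add: act_one)
qed

lemma bu_one2: "bu x one = x"
proof -
  have "bu x one = sw comul x (\<lambda>a b. sc (counit b) a)"
    unfolding bullet_def by (simp add: act_x_one lin_scale[OF lin_mult2])
  then show ?thesis by (simp add: cu2)
qed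

lemma counit_bu: "counit (bu x y) = counit x * counit y"
proof -
  have "counit (bu x y) = sw comul x (\<lambda>a b. counit a * counit b) * counit y"
    unfolding bullet_def by (simp add: counit_sw counit_mult counit_act kmul_sw1 mult.assoc)
  also have "sw comul x (\<lambda>a b. counit a * counit b) = counit x"
    by (rule cuKL; intro LR)
  finally show ?thesis .
qed

lemma hopf: "is_hopf_algebra sc bu one comul counit Sa"
  unfolding is_hopf_algebra_def is_algebra_def bilinear_map_def
proof (intro conjI allI impI)
  show "vector_space sc" by (rule vs)
  show "lin (bu x)" for x by (intro LR2)
  show "lin (\<lambda>x. bu x y)" for y by (intro LR2)
  show "bu (bu x y) z = bu x (bu y z)" for x y z by (rule bu_assoc)
  show "bu one x = x" for x by (rule bu_one1)
  show "bu x one = x" for x by (rule bu_one2)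
  show "is_coalgebra sc comul counit" by (rule coalg)
  show "sw comul (bu x y) B = sw comul x (\<lambda>x1 x2. sw comul y (\<lambda>y1 y2. B (bu x1 y1) (bu x2 y2)))"
    if "bilinear_form sc B" for B x y by (rule dmK[OF that])
  show "sw comul one B = B one one" if "bilinear_form sc B" for B by (rule sw_oneK[OF that])
  show "counit (bu x y) = counit x * counit y" for x y by (rule counit_bu)
  show "counit one = 1" by (rule counit_one)
  show "lin Sa" by (intro LR2)
  show "sw comul x (\<lambda>a b. bu a (Sa b)) = sc (counit x) one" for x by (rule apR)
  show "sw comul x (\<lambda>a b. bu (Sa a) b) = sc (counit x) one" for x by (rule apL)
qed

end

theorem proposition3:
  fixes sc :: "'k::field \<Rightarrow> 'h::ab_group_add \<Rightarrow> 'h"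
    and mult act beta :: "'h \<Rightarrow> 'h \<Rightarrow> 'h"
    and one :: 'h
    and comul :: "'h \<Rightarrow> ('h \<times> 'h) list"
    and counit :: "'h \<Rightarrow> 'k"
    and anti :: "'h \<Rightarrow> 'h"
  assumes "yd_post_hopf sc mult one comul counit anti act beta"
  shows "is_hopf_algebra sc (bullet comul mult act) one comul counit (S_act comul beta anti)"
proof -
  interpret ydp sc mult act beta one comul counit anti by unfold_locales (fact assms)
  show ?thesis by (rule hopf)
qed

end
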